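(* Let $G=\langle a\rangle\times\langle b\rangle\cong\mathbb{Z}\times\mathbb{Z}$ and let $\mathcal{A}$ be a Schur ring over $G$. If $\langle a^k\rangle$ is an $\mathcal{A}$-subgroup for some nonzero integer $k$, then $\langle a\rangle$ is an $\mathcal{A}$-subgroup.
   Context: $\mathbb{F}$ is a field of characteristic $0$. A Schur ring over a group $G$ is a subspace $\mathcal{A}\subseteq\mathbb{F}[G]$ spanned by the elements $\underline{D}=\sum_{g\in D}g$, $D\in\mathcal{D}$, where $\mathcal{D}$ is a partition of $G$ into finite subsets such that $\{1\}\in\mathcal{D}$, $D\in\mathcal{D}\Rightarrow D^{-1}\in\mathcal{D}$, and each product $\underline{D_1}\,\underline{D_2}$ is a finite $\mathbb{F}$-linear combination of the $\underline{D}$, $D\in\mathcal{D}$. The elements of $\mathcal{D}$ are basic sets; an $\mathcal{A}$-subgroup is a subgroup which is a union of basic sets. *)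

theory Defs
  imports Main "HOL-Library.Disjoint_Sets" "HOL-Library.Product_Plus"
begin

(* Groups are written additively (type class group_add); the group algebra F[G]
   is modelled by functions G => F of finite support. The element underline D of
   F[G] is the indicator function of D; the product underline D1 * underline D2
   evaluated at g is the number of pairs (x,y) in D1 x D2 with x + y = g. *)

definition set_prod_coeff :: "'g::group_add set \<Rightarrow> 'g set \<Rightarrow> 'g \<Rightarrow> nat" where
  "set_prod_coeff D1 D2 g = card {(x, y). x \<in> D1 \<and> y \<in> D2 \<and> x + y = g}"

(* Partition D of G giving rise to a Schur ring over G with coefficients in the field F
   (the type 'f); the Schur ring is the F-span of the underline D, D in D. *)
definition schur_ring :: "'f::field_char_0 itself \<Rightarrow> 'g::group_add set set \<Rightarrow> bool" where
  "schur_ring TYPE('f) \<D> \<longleftrightarrow>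
     partition_on (UNIV :: 'g set) \<D> \<and>
     (\<forall>D\<in>\<D>. finite D) \<and>
     {0} \<in> \<D> \<and>
     (\<forall>D\<in>\<D>. uminus ` D \<in> \<D>) \<and>
     (\<forall>D1\<in>\<D>. \<forall>D2\<in>\<D>. \<exists>S (c :: 'g set \<Rightarrow> 'f). finite S \<and> S \<subseteq> \<D> \<and>
        (\<forall>g. of_nat (set_prod_coeff D1 D2 g) = (\<Sum>D\<in>S. c D * (if g \<in> D then 1 else 0))))"

definition is_subgroup :: "'g::group_add set \<Rightarrow> bool" where
  "is_subgroup H \<longleftrightarrow> 0 \<in> H \<and> (\<forall>x\<in>H. \<forall>y\<in>H. x + y \<in> H \<and> - x \<in> H)"

definition A_subgroup :: "'g::group_add set set \<Rightarrow> 'g set \<Rightarrow> bool" where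
  "A_subgroup \<D> H \<longleftrightarrow> is_subgroup H \<and> (\<exists>\<B>\<subseteq>\<D>. H = \<Union>\<B>)"

end

theory Submission imports Defs "HOL-Library.Poly_Mapping" "HOL-Number_Theory.Number_Theory" begin

lemma lookup_sc: "Poly_Mapping.lookup (Poly_Mapping.single 0 c * z) g = (c::int) * Poly_Mapping.lookup z g"
  by (simp flip: mult_map_scale_conv_mult add: Poly_Mapping.map.rep_eq when_def)

definition ind :: "'g set \<Rightarrow> ('g \<Rightarrow>\<^sub>0 int)" where
  "ind S = (\<Sum>t\<in>S. Poly_Mapping.single t 1)"

lemma lookup_ind: "finite S \<Longrightarrow> Poly_Mapping.lookup (ind S) g = (if g \<in> S then 1 else 0)"
  unfolding ind_def by (simp add: lookup_sum lookup_single when_def)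

lemma ind_mult: "finite A \<Longrightarrow> finite B \<Longrightarrow>
   Poly_Mapping.lookup (ind A * ind (B::'g::comm_monoid_add set)) g = (\<Sum>a\<in>A. \<Sum>c\<in>B. if a + c = g then 1 else 0)"
  unfolding ind_def sum_product by (simp add: mult_single lookup_sum lookup_single when_def eq_commute)

lemma card_sum: "finite A \<Longrightarrow> finite B \<Longrightarrow>
   int (card {(x, y). x \<in> A \<and> y \<in> B \<and> x + y = g}) = (\<Sum>a\<in>A. \<Sum>c\<in>B. if a + c = (g::'g::plus) then 1 else 0)"
proof -
  assume f: "finite A" "finite B"
  have "{(x, y). x \<in> A \<and> y \<in> B \<and> x + y = g} = (A \<times> B) \<inter> {z. fst z + snd z = g}" by auto
  hence "int (card {(x, y). x \<in> A \<and> y \<in> B \<and> x + y = g}) = (\<Sum>z\<in>(A \<times> B) \<inter> {z. fst z + snd z = g}. 1)"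
    by simp
  also have "\<dots> = (\<Sum>z\<in>A \<times> B. if fst z + snd z = g then 1 else 0)"
    using f by (subst sum.inter_restrict) auto
  also have "\<dots> = (\<Sum>a\<in>A. \<Sum>c\<in>B. if a + c = g then 1 else 0)"
    by (simp add: sum.cartesian_product case_prod_beta)
  finally show ?thesis .
qed

lemma part_uniq:
  assumes "partition_on UNIV P" "D \<in> P" "D' \<in> P" "g \<in> D" "g \<in> D'"
  shows "D = D'"
  using assms unfolding partition_on_def disjoint_def by blast

lemma part_ex:
  assumes "partition_on UNIV P" shows "\<exists>D\<in>P. g \<in> D"
  using assms unfolding partition_on_def by blast

definition cls :: "'g set set \<Rightarrow> 'g \<Rightarrow> 'g set" where
  "cls P g = (THE D. D \<in> P \<and> g \<in> D)"

lemma cls: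
  assumes "partition_on UNIV P"
  shows "cls P g \<in> P" "g \<in> cls P g"
proof -
  obtain D where D: "D \<in> P" "g \<in> D" using part_ex[OF assms] by blast
  have "cls P g = D" unfolding cls_def
    by (rule the_equality) (use D part_uniq[OF assms] in auto)
  thus "cls P g \<in> P" "g \<in> cls P g" using D by auto
qed

lemma cls_eq:
  assumes "partition_on UNIV P" "D \<in> P" "g \<in> D" shows "cls P g = D"
  using cls[OF assms(1)] part_uniq[OF assms(1)] assms by blast

lemma schur_const:
  fixes \<D> :: "'g::group_add set set"
  assumes SR: "schur_ring TYPE('f::field_char_0) \<D>"
    and D1: "D1 \<in> \<D>" and D2: "D2 \<in> \<D>" and E: "E \<in> \<D>" and g: "g \<in> E" and h: "h \<in> E"
  shows "set_prod_coeff D1 D2 g = set_prod_coeff D1 D2 h"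
proof -
  have P: "partition_on UNIV \<D>" using SR unfolding schur_ring_def by blast
  obtain S and c :: "'g set \<Rightarrow> 'f" where S: "finite S" "S \<subseteq> \<D>"
     and eq: "\<And>g. of_nat (set_prod_coeff D1 D2 g) = (\<Sum>D\<in>S. c D * (if g \<in> D then 1 else 0))"
    using SR D1 D2 unfolding schur_ring_def by blast
  have key: "(of_nat (set_prod_coeff D1 D2 x) :: 'f) = (if E \<in> S then c E else 0)" if x: "x \<in> E" for x
  proof -
    have "(\<Sum>D\<in>S. c D * (if x \<in> D then 1 else 0)) = (\<Sum>D\<in>S. if D = E then c D else 0)"
    proof (rule sum.cong)
      fix D assume "D \<in> S"
      hence "D \<in> \<D>" using S by blast
      hence "x \<in> D \<longleftrightarrow> D = E" using part_uniq[OF P _ E _ x] x by blast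
      thus "c D * (if x \<in> D then 1 else 0) = (if D = E then c D else 0)" by simp
    qed simp
    also have "\<dots> = (if E \<in> S then c E else 0)" using S by (simp add: sum.delta)
    finally show ?thesis using eq by simp
  qed
  have "(of_nat (set_prod_coeff D1 D2 g) :: 'f) = of_nat (set_prod_coeff D1 D2 h)"
    using key[OF g] key[OF h] by simp
  thus ?thesis by simp
qed

definition Afun :: "'g set set \<Rightarrow> ('g \<Rightarrow>\<^sub>0 int) \<Rightarrow> bool" where
  "Afun P z \<longleftrightarrow> (\<forall>D\<in>P. \<forall>g\<in>D. \<forall>h\<in>D. Poly_Mapping.lookup z g = Poly_Mapping.lookup z h)"

lemma Afun_basic_prod:
  fixes \<D> :: "'g::ab_group_add set set"
  assumes SR: "schur_ring TYPE('f::field_char_0) \<D>" and D1: "D1 \<in> \<D>" and D2: "D2 \<in> \<D>"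
  shows "Afun \<D> (ind D1 * ind D2)"
proof -
  have f: "finite D1" "finite D2" using SR D1 D2 unfolding schur_ring_def by auto
  show ?thesis unfolding Afun_def
  proof (intro ballI)
    fix E g h assume "E \<in> \<D>" "g \<in> E" "h \<in> E"
    from schur_const[OF SR D1 D2 this] show "Poly_Mapping.lookup (ind D1 * ind D2) g = Poly_Mapping.lookup (ind D1 * ind D2) h"
      unfolding ind_mult[OF f] card_sum[OF f, symmetric] set_prod_coeff_def by simp
  qed
qed

lemma Afun_add:
  assumes ax: "Afun P x" and ay: "Afun P y"
  shows "Afun P (x + y)"
  unfolding Afun_def lookup_add
proof (intro ballI)
  fix D g h assume dgh: "D \<in> P" "g \<in> D" "h \<in> D"
  have e1: "Poly_Mapping.lookup x g = Poly_Mapping.lookup x h" by (rule ax[unfolded Afun_def, rule_format, OF dgh])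
  have e2: "Poly_Mapping.lookup y g = Poly_Mapping.lookup y h" by (rule ay[unfolded Afun_def, rule_format, OF dgh])
  show "Poly_Mapping.lookup x g + Poly_Mapping.lookup y g = Poly_Mapping.lookup x h + Poly_Mapping.lookup y h"
    unfolding e1 e2 ..
qed

lemma Afun_zero: "Afun P 0"
  unfolding Afun_def by simp

lemma Afun_sum:
  assumes "\<And>i. i \<in> I \<Longrightarrow> Afun P (f i)"
  shows "Afun P (sum f I)"
proof (cases "finite I")
  case False
  thus ?thesis by (simp add: Afun_zero)
next
  case True
  thus ?thesis using assms
  proof (induction I rule: finite_induct)
    case empty
    show ?case by (simp add: Afun_zero)
  next
    case (insert a I)
    have h1: "Afun P (f a)" by (rule insert.prems) simp
    have h2: "Afun P (sum f I)" by (rule insert.IH) (rule insert.prems, simp)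
    show ?case unfolding sum.insert[OF insert.hyps] by (rule Afun_add[OF h1 h2])
  qed
qed

lemma Afun_sc:
  assumes ax: "Afun P x"
  shows "Afun P (Poly_Mapping.single 0 c * x)"
  unfolding Afun_def lookup_sc
proof (intro ballI)
  fix D g h assume dgh: "D \<in> P" "g \<in> D" "h \<in> D"
  have e1: "Poly_Mapping.lookup x g = Poly_Mapping.lookup x h" by (rule ax[unfolded Afun_def, rule_format, OF dgh])
  show "c * Poly_Mapping.lookup x g = c * Poly_Mapping.lookup x h" unfolding e1 ..
qed

lemma Afun_rep:
  fixes \<D> :: "'g::ab_group_add set set"
  assumes SR: "schur_ring TYPE('f::field_char_0) \<D>" and A: "Afun \<D> z"
  shows "z = (\<Sum>D\<in>cls \<D> ` Poly_Mapping.keys z. Poly_Mapping.single 0 (Poly_Mapping.lookup z (SOME g. g \<in> D)) * ind D)"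
proof (rule poly_mapping_eqI)
  fix g
  have P: "partition_on UNIV \<D>" using SR unfolding schur_ring_def by blast
  have fin: "\<And>D. D \<in> \<D> \<Longrightarrow> finite D" using SR unfolding schur_ring_def by blast
  let ?R = "cls \<D> ` Poly_Mapping.keys z"
  let ?E = "cls \<D> g"
  have RD: "?R \<subseteq> \<D>" using cls(1)[OF P] by blast
  have "Poly_Mapping.lookup (\<Sum>D\<in>?R. Poly_Mapping.single 0 (Poly_Mapping.lookup z (SOME g. g \<in> D)) * ind D) g
      = (\<Sum>D\<in>?R. Poly_Mapping.lookup z (SOME g. g \<in> D) * (if g \<in> D then 1 else 0))"
    using RD fin by (auto simp: lookup_sum lookup_sc lookup_ind intro!: sum.cong)
  also have "\<dots> = (\<Sum>D\<in>?R. if D = ?E then Poly_Mapping.lookup z (SOME g. g \<in> D) else 0)"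
  proof (rule sum.cong)
    fix D assume "D \<in> ?R"
    hence "D \<in> \<D>" using RD by blast
    hence "g \<in> D \<longleftrightarrow> D = ?E" using cls[OF P, of g] part_uniq[OF P] by blast
    thus "Poly_Mapping.lookup z (SOME g. g \<in> D) * (if g \<in> D then 1 else 0) = (if D = ?E then Poly_Mapping.lookup z (SOME g. g \<in> D) else 0)"
      by simp
  qed simp
  also have "\<dots> = (if ?E \<in> ?R then Poly_Mapping.lookup z (SOME g. g \<in> ?E) else 0)"
    by (simp add: sum.delta)
  also have "\<dots> = Poly_Mapping.lookup z g"
  proof (cases "?E \<in> ?R")
    case True
    have "(SOME x. x \<in> ?E) \<in> ?E" using cls(2)[OF P, of g] by (rule someI)
    hence "Poly_Mapping.lookup z (SOME g. g \<in> ?E) = Poly_Mapping.lookup z g"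
      using A cls[OF P, of g] unfolding Afun_def by blast
    thus ?thesis using True by simp
  next
    case False
    hence "g \<notin> Poly_Mapping.keys z" by blast
    thus ?thesis using False by (simp add: in_keys_iff)
  qed
  finally show "Poly_Mapping.lookup z g = Poly_Mapping.lookup (\<Sum>D\<in>?R. Poly_Mapping.single 0 (Poly_Mapping.lookup z (SOME g. g \<in> D)) * ind D) g" by simp
qed

lemma Afun_mult:
  fixes \<D> :: "'g::ab_group_add set set"
  assumes SR: "schur_ring TYPE('f::field_char_0) \<D>" and A: "Afun \<D> x" and B: "Afun \<D> y"
  shows "Afun \<D> (x * y)"
proof -
  have P: "partition_on UNIV \<D>" using SR unfolding schur_ring_def by blast
  let ?Rx = "cls \<D> ` Poly_Mapping.keys x" and ?Ry = "cls \<D> ` Poly_Mapping.keys y"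
  let ?cx = "\<lambda>D. Poly_Mapping.lookup x (SOME g. g \<in> D)" and ?cy = "\<lambda>D. Poly_Mapping.lookup y (SOME g. g \<in> D)"
  have "x * y = (\<Sum>D\<in>?Rx. Poly_Mapping.single 0 (?cx D) * ind D) * (\<Sum>E\<in>?Ry. Poly_Mapping.single 0 (?cy E) * ind E)"
    using Afun_rep[OF SR A] Afun_rep[OF SR B] by simp
  also have "\<dots> = (\<Sum>D\<in>?Rx. \<Sum>E\<in>?Ry. Poly_Mapping.single 0 (?cx D * ?cy E) * (ind D * ind E))"
    unfolding sum_product by (intro sum.cong refl) (simp add: mult_single[of 0 _ 0, simplified, symmetric] ac_simps)
  finally have eq: "x * y = \<dots>" .
  show ?thesis unfolding eq
    by (intro Afun_sum Afun_sc Afun_basic_prod[OF SR]) (use cls(1)[OF P] in auto)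
qed

lemma Afun_pow:
  fixes \<D> :: "'g::ab_group_add set set"
  assumes SR: "schur_ring TYPE('f::field_char_0) \<D>" and A: "Afun \<D> x"
  shows "Afun \<D> (x ^ Suc n)"
proof (induction n)
  case 0
  show ?case using A by simp
next
  case (Suc n)
  show ?case unfolding power_Suc[of x "Suc n"] by (rule Afun_mult[OF SR A Suc.IH])
qed


lemma frob2:
  fixes x y :: "'a::comm_ring_1"
  assumes p: "prime p"
  shows "of_nat p dvd ((x + y) ^ p - x ^ p - y ^ p)"
proof -
  have p1: "p > 1" using p prime_gt_1_nat by blast
  define F where "F k = of_nat (p choose k) * x ^ k * y ^ (p - k)" for k
  have st: "{..p} = insert 0 (insert p {1..<p})" using p1 by auto
  have s1: "(\<Sum>k\<in>insert 0 (insert p {1..<p}). F k) = F 0 + (\<Sum>k\<in>insert p {1..<p}. F k)"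
    by (rule sum.insert) (use p1 in auto)
  have s2: "(\<Sum>k\<in>insert p {1..<p}. F k) = F p + (\<Sum>k\<in>{1..<p}. F k)"
    by (rule sum.insert) auto
  have "(x + y) ^ p = (\<Sum>k\<le>p. F k)" unfolding F_def by (rule binomial_ring)
  also have "\<dots> = F 0 + (F p + (\<Sum>k\<in>{1..<p}. F k))"
    unfolding st s1 s2 ..
  also have "F 0 = y ^ p" unfolding F_def by simp
  also have "F p = x ^ p" unfolding F_def by simp
  finally have h: "(x + y) ^ p = y ^ p + (x ^ p + (\<Sum>k\<in>{1..<p}. F k))" .
  have r: "\<And>A B C D::'a. A = B + (C + D) \<Longrightarrow> A - C - B = D" by (simp add: algebra_simps)
  have eq: "(x + y) ^ p - x ^ p - y ^ p = (\<Sum>k\<in>{1..<p}. F k)" by (rule r[OF h])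
  show ?thesis unfolding eq
  proof (rule dvd_sum)
    fix k assume k: "k \<in> {1..<p}"
    have "p dvd (p choose k)" using k p by (intro dvd_choose_prime) auto
    then obtain c where c: "p choose k = p * c" by blast
    have "F k = of_nat p * (of_nat c * x ^ k * y ^ (p - k))" unfolding F_def c of_nat_mult
      by (simp only: mult.assoc)
    thus "of_nat p dvd F k" by (rule dvdI)
  qed
qed
lemma frob_sum:
  fixes f :: "'b \<Rightarrow> 'a::comm_ring_1"
  assumes p: "prime p" and T: "finite T"
  shows "of_nat p dvd ((\<Sum>t\<in>T. f t) ^ p - (\<Sum>t\<in>T. f t ^ p))"
  using T
proof (induction T rule: finite_induct)
  case empty
  have "p > 0" using p prime_gt_0_nat by blast
  thus ?case by (simp add: power_0_left)
next
  case (insert a T)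
  have eq: "(\<Sum>t\<in>insert a T. f t) ^ p - (\<Sum>t\<in>insert a T. f t ^ p)
      = ((f a + sum f T) ^ p - f a ^ p - sum f T ^ p) + (sum f T ^ p - (\<Sum>t\<in>T. f t ^ p))"
  proof -
    have r: "\<And>A b S Q :: 'a. A - (b + Q) = (A - b - S) + (S - Q)" by (simp add: algebra_simps)
    show ?thesis using insert.hyps by (simp only: sum.insert[OF insert.hyps] r)
  qed
  show ?case by (simp only: eq) (rule dvd_add[OF frob2[OF p] insert.IH])
qed

definition dil :: "nat \<Rightarrow> int \<times> int \<Rightarrow> int \<times> int" where
  "dil n t = (int n * fst t, int n * snd t)"

lemma single_pow: "Poly_Mapping.single t (1::int) ^ n = Poly_Mapping.single (dil n t) 1"
proof (induction n)
  case 0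
  have "dil 0 t = 0" by (simp add: dil_def zero_prod_def)
  thus ?case by simp
next
  case (Suc n)
  have "dil (Suc n) t = t + dil n t" by (simp add: dil_def prod_eq_iff algebra_simps)
  thus ?case using Suc by (simp add: mult_single)
qed

lemma dil_dil: "dil p (dil q t) = dil (p * q) t"
  by (simp add: dil_def)

lemma inj_dil: "n > 0 \<Longrightarrow> inj (dil n)"
  by (auto simp: inj_def dil_def prod_eq_iff)

definition Aset :: "'g set set \<Rightarrow> 'g set \<Rightarrow> bool" where
  "Aset P S \<longleftrightarrow> finite S \<and> (\<forall>D\<in>P. \<forall>g\<in>D. \<forall>h\<in>D. g \<in> S \<longrightarrow> h \<in> S)"

lemma Afun_ind:
  assumes A: "Aset P S"
  shows "Afun P (ind S)"
  unfolding Afun_def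
proof (intro ballI)
  fix D g h assume dgh: "D \<in> P" "g \<in> D" "h \<in> D"
  have f: "finite S" using A unfolding Aset_def by blast
  have i1: "g \<in> S \<longrightarrow> h \<in> S" using A dgh unfolding Aset_def by blast
  have i2: "h \<in> S \<longrightarrow> g \<in> S" using A dgh unfolding Aset_def by blast
  have "g \<in> S \<longleftrightarrow> h \<in> S" using i1 i2 by blast
  thus "Poly_Mapping.lookup (ind S) g = Poly_Mapping.lookup (ind S) h" unfolding lookup_ind[OF f] by simp
qed

lemma Aset_basic:
  assumes SR: "schur_ring TYPE('f::field_char_0) \<D>" and D: "D \<in> \<D>"
  shows "Aset \<D> D"
proof -
  have P: "partition_on UNIV \<D>" using SR unfolding schur_ring_def by blast
  show ?thesis unfolding Aset_def using SR D part_uniq[OF P] unfolding schur_ring_def by blast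
qed

lemma lookup_ofnat_mult: "Poly_Mapping.lookup (of_nat p * w) g = int p * Poly_Mapping.lookup w g"
  by (simp add: single_of_nat[symmetric] lookup_sc del: single_of_nat)

lemma dil_Aset:
  fixes \<D> :: "(int \<times> int) set set"
  assumes SR: "schur_ring TYPE('f::field_char_0) \<D>" and p: "prime p" and T: "Aset \<D> T"
  shows "Aset \<D> (dil p ` T)"
proof -
  have p1: "p > 1" using p prime_gt_1_nat by blast
  have fT: "finite T" using T unfolding Aset_def by blast
  have e1: "ind (dil p ` T) = (\<Sum>t\<in>T. Poly_Mapping.single t 1 ^ p)"
    unfolding ind_def single_pow
    by (subst sum.reindex) (use inj_dil[of p] p1 in \<open>auto intro: inj_on_subset\<close>)
  have "of_nat p dvd (ind T ^ p - ind (dil p ` T))"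
    unfolding e1 by (unfold ind_def, rule frob_sum[OF p fT])
  then obtain w where w: "ind T ^ p - ind (dil p ` T) = of_nat p * w" by blast
  have AF0: "Afun \<D> (ind T ^ Suc (p - 1))" by (rule Afun_pow[OF SR Afun_ind[OF T]])
  have "Suc (p - 1) = p" using p1 by simp
  hence AF: "Afun \<D> (ind T ^ p)" using AF0 by simp
  have fd: "finite (dil p ` T)" using fT by simp
  have lk: "Poly_Mapping.lookup (ind T ^ p) g = (if g \<in> dil p ` T then 1 else 0) + int p * Poly_Mapping.lookup w g" for g
  proof -
    have "Poly_Mapping.lookup (ind T ^ p) g = Poly_Mapping.lookup (ind (dil p ` T)) g + Poly_Mapping.lookup (of_nat p * w) g"
    proof -
      have "ind T ^ p = of_nat p * w + ind (dil p ` T)" using w by (simp only: diff_eq_eq)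
      thus ?thesis unfolding lookup_add by (simp only: lookup_add add.commute)
    qed
    thus ?thesis by (simp add: lookup_ind[OF fd] lookup_ofnat_mult)
  qed
  have "h \<in> dil p ` T" if D: "D \<in> \<D>" and g: "g \<in> D" and h: "h \<in> D" and gi: "g \<in> dil p ` T" for D g h
  proof (rule ccontr)
    assume hn: "h \<notin> dil p ` T"
    have "Poly_Mapping.lookup (ind T ^ p) g = Poly_Mapping.lookup (ind T ^ p) h"
      by (rule AF[unfolded Afun_def, rule_format, OF D g h])
    hence "1 + int p * Poly_Mapping.lookup w g = int p * Poly_Mapping.lookup w h"
      using lk[of g] lk[of h] gi hn by simp
    hence "int p * (Poly_Mapping.lookup w h - Poly_Mapping.lookup w g) = 1" by (simp add: algebra_simps)
    hence "int p dvd 1" by (metis dvd_triv_left)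
    thus False using p1 by simp
  qed
  thus ?thesis unfolding Aset_def using fd by blast
qed

lemma dil_pow_Aset:
  fixes \<D> :: "(int \<times> int) set set"
  assumes SR: "schur_ring TYPE('f::field_char_0) \<D>" and p: "prime p" and T: "Aset \<D> T"
  shows "Aset \<D> (dil (p ^ j) ` T)"
proof (induction j)
  case 0
  have "dil 1 ` T = T" by (simp add: dil_def image_def)
  thus ?case using T by simp
next
  case (Suc j)
  have "dil (p ^ Suc j) ` T = dil p ` (dil (p ^ j) ` T)" by (simp add: image_image dil_dil)
  thus ?case using dil_Aset[OF SR p Suc] by simp
qed


lemma sum_ge_one:
  fixes F :: "'a \<Rightarrow> 'b \<Rightarrow> int"
  assumes "finite A" "finite B" "a \<in> A" "b \<in> B" "\<And>x y. F x y \<ge> 0" "F a b \<ge> 1"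
  shows "(\<Sum>x\<in>A. \<Sum>y\<in>B. F x y) \<ge> 1"
proof -
  have "F a b \<le> (\<Sum>y\<in>B. F a y)" using assms by (intro member_le_sum) auto
  also have "\<dots> \<le> (\<Sum>x\<in>A. \<Sum>y\<in>B. F x y)" using assms by (intro member_le_sum sum_nonneg) auto
  finally show ?thesis using assms(6) by simp
qed

theorem mainTheorem2:
  fixes \<D> :: "(int \<times> int) set set" and k :: int
  assumes "schur_ring TYPE('f::field_char_0) \<D>"
    and "k \<noteq> 0"
    and "A_subgroup \<D> {(k * n, 0) | n. True}"
  shows "A_subgroup \<D> {(n, 0) | n. True}"
proof -
  note SR = assms(1)
  have P: "partition_on UNIV \<D>" using SR unfolding schur_ring_def by blast
  have finD: "\<And>D. D \<in> \<D> \<Longrightarrow> finite D" using SR unfolding schur_ring_def by blast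
  have negD: "\<And>D. D \<in> \<D> \<Longrightarrow> uminus ` D \<in> \<D>" using SR unfolding schur_ring_def by blast
  obtain \<B> where Bsub: "\<B> \<subseteq> \<D>" and HB: "{(k * n, 0) | n. True} = \<Union>\<B>"
    using assms(3) unfolding A_subgroup_def by blast
  let ?H1 = "{(n, 0::int) | n::int. True}"
  have key: "cls \<D> g \<subseteq> ?H1" if g: "g \<in> ?H1" for g
  proof
    fix y assume yT: "y \<in> cls \<D> g"
    show "y \<in> ?H1"
    proof (rule ccontr)
      assume ny: "y \<notin> ?H1"
      obtain m where gm: "g = (m, 0)" using g by blast
      obtain a b where yab: "y = (a, b)" and b: "b \<noteq> 0" using ny by (cases y) auto
      let ?T = "cls \<D> g"
      have TD: "?T \<in> \<D>" and gT: "g \<in> ?T" using cls[OF P] by auto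
      obtain p where p: "prime p" "p > nat \<bar>k\<bar>" using bigger_prime by blast
      have kpos: "nat \<bar>k\<bar> > 0" using assms(2) by simp
      have ndvd: "\<not> p dvd nat \<bar>k\<bar>"
      proof
        assume "p dvd nat \<bar>k\<bar>"
        hence "p \<le> nat \<bar>k\<bar>" using kpos by (rule dvd_imp_le)
        thus False using p(2) by simp
      qed
      have cop: "coprime p (nat \<bar>k\<bar>)" using p(1) ndvd by (simp add: prime_imp_coprime)
      define j where "j = totient (nat \<bar>k\<bar>) * (nat \<bar>b\<bar> + 1)"
      define N where "N = p ^ j"
      have c1: "[p ^ totient (nat \<bar>k\<bar>) = 1] (mod nat \<bar>k\<bar>)" using euler_theorem[OF cop] .
      have "[(p ^ totient (nat \<bar>k\<bar>)) ^ (nat \<bar>b\<bar> + 1) = 1 ^ (nat \<bar>b\<bar> + 1)] (mod nat \<bar>k\<bar>)"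
        by (rule cong_pow[OF c1])
      moreover have "N = (p ^ totient (nat \<bar>k\<bar>)) ^ (nat \<bar>b\<bar> + 1)"
        unfolding N_def j_def by (rule power_mult)
      ultimately have cN: "[N = 1] (mod nat \<bar>k\<bar>)" by simp
      hence c2: "[int N = int 1] (mod int (nat \<bar>k\<bar>))" using cong_int_iff by blast
      have "int (nat \<bar>k\<bar>) dvd int N - int 1" using c2 cong_iff_dvd_diff by blast
      hence kd: "k dvd int N - 1" by simp
      have tpos: "totient (nat \<bar>k\<bar>) \<ge> 1" using kpos by (simp add: Suc_le_eq)
      have "1 * (nat \<bar>b\<bar> + 1) \<le> totient (nat \<bar>k\<bar>) * (nat \<bar>b\<bar> + 1)"
        by (rule mult_right_mono[OF tpos]) simp
      hence jb: "j \<ge> nat \<bar>b\<bar> + 1" unfolding j_def by simp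
      have "j < 2 ^ j" by (rule less_exp)
      also have "(2::nat) ^ j \<le> p ^ j" using p(1) prime_ge_2_nat by (intro power_mono) auto
      finally have "j < N" unfolding N_def .
      hence i1: "int j < int N" by simp
      have i2: "int (nat \<bar>b\<bar>) + 1 \<le> int j" using jb by simp
      have i3: "int (nat \<bar>b\<bar>) = \<bar>b\<bar>" by simp
      have Nb: "int N > \<bar>b\<bar>" using i1 i2 i3 by linarith
      have Npos: "N > 0" unfolding N_def using p(1) prime_gt_0_nat by simp
      have S: "Aset \<D> (dil N ` ?T)"
        unfolding N_def by (rule dil_pow_Aset[OF SR p(1) Aset_basic[OF SR TD]])
      obtain q where q: "int N - 1 = k * q" using kd by blast
      let ?d = "dil N g - g"
      have "int N * m - m = (int N - 1) * m" by (simp add: algebra_simps)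
      also have "\<dots> = k * (q * m)" unfolding q by (simp only: mult.assoc)
      finally have qm: "int N * m - m = k * (q * m)" .
      have dval: "?d = (k * (q * m), 0)" unfolding gm dil_def using qm by simp
      have dH: "?d \<in> {(k * n, 0) | n. True}" unfolding dval by (rule CollectI, rule exI[of _ "q * m"]) simp
      hence "?d \<in> \<Union>\<B>" unfolding HB .
      then obtain B0 where B0: "B0 \<in> \<B>" "?d \<in> B0" by blast
      have B0D: "B0 \<in> \<D>" using B0 Bsub by blast
      have B0H: "B0 \<subseteq> {(k * n, 0) | n. True}" unfolding HB using B0(1) by (rule Union_upper)
      have nB: "uminus ` B0 \<in> \<D>" by (rule negD[OF B0D])
      have fS: "finite (dil N ` ?T)" using S unfolding Aset_def by blast
      have fC: "finite (uminus ` B0)" using finD[OF nB] .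
      have AF: "Afun \<D> (ind (dil N ` ?T) * ind (uminus ` B0))"
        by (rule Afun_mult[OF SR Afun_ind[OF S] Afun_ind[OF Aset_basic[OF SR nB]]])
      have eqv: "Poly_Mapping.lookup (ind (dil N ` ?T) * ind (uminus ` B0)) g
                = Poly_Mapping.lookup (ind (dil N ` ?T) * ind (uminus ` B0)) y"
        by (rule AF[unfolded Afun_def, rule_format, OF TD gT yT])
      have lg: "Poly_Mapping.lookup (ind (dil N ` ?T) * ind (uminus ` B0)) g \<ge> 1"
      proof -
        have m1: "dil N g \<in> dil N ` ?T" using gT by (rule imageI)
        have m2: "- ?d \<in> uminus ` B0" using B0(2) by (rule imageI)
        have e: "dil N g + - ?d = g" by (simp add: algebra_simps)
        show ?thesis unfolding ind_mult[OF fS fC]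
          by (rule sum_ge_one[OF fS fC m1 m2]) (simp_all add: e)
      qed
      have inner: "s + c \<noteq> y" if s: "s \<in> dil N ` ?T" and c: "c \<in> uminus ` B0" for s c
      proof -
        obtain t where t: "t \<in> ?T" "s = dil N t" using s by blast
        obtain h where h: "h \<in> B0" "c = - h" using c by blast
        have "h \<in> {(k * n, 0) | n. True}" using B0H h(1) by (rule subsetD)
        then obtain n where hn: "h = (k * n, 0)" by blast
        have sc: "snd (s + c) = int N * snd t" using t h hn by (simp add: dil_def)
        show "s + c \<noteq> y"
        proof
          assume "s + c = y"
          hence e: "int N * snd t = b" using sc yab by simp
          show False
          proof (cases "snd t = 0")
            case True thus False using e b by simp
          next
            case False
            hence "\<bar>snd t\<bar> \<ge> 1" by linarith
            hence "int N * 1 \<le> int N * \<bar>snd t\<bar>" by (intro mult_left_mono) auto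
            hence "\<bar>int N * snd t\<bar> \<ge> int N" by (simp add: abs_mult)
            thus False using e Nb by linarith
          qed
        qed
      qed
      have ly: "Poly_Mapping.lookup (ind (dil N ` ?T) * ind (uminus ` B0)) y = 0"
        unfolding ind_mult[OF fS fC]
        by (rule sum.neutral, rule ballI, rule sum.neutral, rule ballI) (simp add: inner)
      show False using eqv lg ly by simp
    qed
  qed
  show ?thesis unfolding A_subgroup_def is_subgroup_def
  proof (intro conjI ballI)
    show "0 \<in> ?H1" by (simp add: zero_prod_def)
  next
    fix x y assume "x \<in> ?H1" "y \<in> ?H1"
    then obtain n1 n2 where "x = (n1, 0)" "y = (n2, 0)" by blast
    hence "x + y = (n1 + n2, 0)" by simp
    thus "x + y \<in> ?H1" by blast
  next
    fix x assume "x \<in> ?H1"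
    then obtain n1 where "x = (n1, 0)" by blast
    hence "- x = (- n1, 0)" by simp
    thus "- x \<in> ?H1" by blast
  next
    show "\<exists>\<B>'\<subseteq>\<D>. ?H1 = \<Union>\<B>'"
    proof (intro exI conjI)
      show "{D \<in> \<D>. D \<subseteq> ?H1} \<subseteq> \<D>" by blast
      show "?H1 = \<Union>{D \<in> \<D>. D \<subseteq> ?H1}"
      proof
        show "?H1 \<subseteq> \<Union>{D \<in> \<D>. D \<subseteq> ?H1}"
        proof
          fix g assume g: "g \<in> ?H1"
          show "g \<in> \<Union>{D \<in> \<D>. D \<subseteq> ?H1}" using key[OF g] cls[OF P, of g] by blast
        qed
      qed blast
    qed
  qed
qed

end
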